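(* Let $0<\varepsilon<1$ and $N\ge1$. Then for every $t$, $$\left|F(t)-\hat F_N(t)\right|\le\left(\frac{\hat F_N(t)\big(1-\hat F_N(t)\big)}{N\varepsilon}\right)^{1/2}+\left(\frac1N+\frac{1}{N\varepsilon^{1/2}}\right)\left|\sum_{n=1}^N\mathds{1}\Big(\hat Q^{[n]}-\big|e_Q^{[n]}\big|\le t\le\hat Q^{[n]}+\big|e_Q^{[n]}\big|\Big)\right|+\frac{2}{(2N\varepsilon)^{3/4}}$$ with probability greater than or equal to $1-2\varepsilon+\varepsilon^2$.
   Context: Consider the initial value problem $\dot y=f(y,t;\theta)$, $t\in(0,T]$, $y(0)=y_0$, where $\theta$ is a random parameter, and a linear functional $S$ and threshold $R$. The quantity of interest $Q(y;\theta)=\min_{t\in(0,T]}\arg(S(y(t;\theta))=R)$ (the first time the threshold is reached, assumed to exist) is a random variable with cumulative distribution function $F(t)=P(\{\theta:Q(y;\theta)\le t\})$. Let $\theta^{[1]},\dots,\theta^{[N]}$ be independent samples of $\theta$ (Monte Carlo sampling), let $Q^{[n]}$ be the exact value of the QoI for $\theta^{[n]}$, and let $\hat Q^{[n]}$ be the value computed from a numerical solution $Y^{[n]}$ for $\theta^{[n]}$, with error $e_Q^{[n]}=Q^{[n]}-\hat Q^{[n]}$. Define the nominal empirical CDF $F_N(t)=\frac1N\sum_{n=1}^N\mathds{1}(Q^{[n]}\le t)$ and the approximate empirical CDF $\hat F_N(t)=\frac1N\sum_{n=1}^N\mathds{1}(\hat Q^{[n]}\le t)$, where $\mathds{1}$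 is the indicator function. *)

theory Defs
  imports "HOL-Probability.Probability"
begin

text \<open>D : distribution of the random parameter theta; Q : exact QoI as a function
  of theta; Qh : QoI computed from the numerical solution for theta.
  A Monte Carlo sample of size N is a point w of the product space
  sample_space D N, i.e. w n = theta^[n] for n in {1..N}.\<close>

definition cdf_QoI :: "'p measure \<Rightarrow> ('p \<Rightarrow> real) \<Rightarrow> real \<Rightarrow> real" where
  "cdf_QoI D Q t = measure D {th \<in> space D. Q th \<le> t}"

definition sample_space :: "'p measure \<Rightarrow> nat \<Rightarrow> (nat \<Rightarrow> 'p) measure" where
  "sample_space D N = PiM {1..N} (\<lambda>_. D)"

definition ecdf :: "nat \<Rightarrow> ('p \<Rightarrow> real) \<Rightarrow> (nat \<Rightarrow> 'p) \<Rightarrow> real \<Rightarrow> real" where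
  "ecdf N Q w t = (1 / real N) * (\<Sum>n=1..N. if Q (w n) \<le> t then 1 else 0)"

end

theory Submission
  imports Defs
begin

lemma det_main:
  fixes F G H K N e :: real
  assumes F: "0 \<le> F" "F \<le> 1" and G: "0 \<le> G" "G \<le> 1" and H: "0 \<le> H" "H \<le> 1"
    and GH: "\<bar>G - H\<bar> \<le> K / N" and K: "sqrt K \<le> K" "0 \<le> K" and N: "N \<ge> 1" and e: "0 < e"
    and x1: "N * e > 1"
    and E: "(G - F)^2 < (F * (1 - F) + 1 / (4 * sqrt (N * e))) / (N * e)"
  shows "\<bar>F - H\<bar> \<le> sqrt (H * (1 - H) / (N * e)) + (1 / N + 1 / (N * sqrt e)) * \<bar>K\<bar>
           + 2 / (2 * N * e) powr (3/4)"
proof -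
  define x where "x = N * e"
  have x0: "x > 1" using x1 x_def by simp
  define d where "d = \<bar>F - G\<bar>"
  define \<beta> where "\<beta> = 1 / (4 * sqrt x)"
  have sx: "sqrt x > 1" using x0 by simp
  have b0: "0 \<le> \<beta>" "\<beta> \<le> 1/4" using sx by (auto simp: \<beta>_def field_simps)
  have V: "F * (1 - F) \<le> 1/4"
  proof -
    have "F * (1 - F) = 1/4 - (F - 1/2)^2" by (simp add: power2_eq_square algebra_simps)
    then show ?thesis by simp
  qed
  have d2: "d^2 < (F * (1 - F) + \<beta>) / x" using E by (simp add: d_def x_def \<beta>_def power2_abs abs_minus_commute power2_commute)
  have "d^2 \<le> (1/2) / x" 
  proof -
    have "(F * (1 - F) + \<beta>) / x \<le> (1/2)/x" using V b0 x0 by (intro divide_right_mono) auto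
    then show ?thesis using d2 by linarith
  qed
  then have "d \<le> sqrt ((1/2)/x)" using d_def by (metis abs_ge_zero real_le_rsqrt)
  also have "\<dots> = 1 / (sqrt 2 * sqrt x)" by (simp add: real_sqrt_divide real_sqrt_mult)
  finally have dle: "d \<le> 1 / (sqrt 2 * sqrt x)" .
  have VG: "F * (1 - F) \<le> G * (1 - G) + d"
  proof -
    have "F * (1 - F) - G * (1 - G) = (F - G) * (1 - F - G)" by algebra
    also have "\<dots> \<le> \<bar>(F - G) * (1 - F - G)\<bar>" by simp
    also have "\<dots> \<le> d" unfolding d_def using F G by (simp add: abs_mult mult_left_le)
    finally show ?thesis by linarith
  qed
  have GHK: "G * (1 - G) \<le> H * (1 - H) + K / N"
  proof -
    have "G * (1 - G) - H * (1 - H) = (G - H) * (1 - G - H)" by algebra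
    also have "\<dots> \<le> \<bar>(G - H) * (1 - G - H)\<bar>" by simp
    also have "\<dots> \<le> \<bar>G - H\<bar>" using G H by (simp add: abs_mult mult_left_le)
    finally show ?thesis using GH by linarith
  qed
  have "(F * (1 - F) + \<beta>) / x \<le> (H * (1 - H) + K / N + (d + \<beta>)) / x"
    using VG GHK x0 by (intro divide_right_mono) auto
  also have "\<dots> = (H * (1 - H) / x + K / N / x) + (d + \<beta>) / x" by (simp add: add_divide_distrib)
  finally have "d^2 < (H * (1 - H) / x + K / N / x) + (d + \<beta>) / x" using d2 by linarith
  then have "d < sqrt (H * (1 - H) / x + K / N / x + (d + \<beta>) / x)"
    by (metis abs_of_nonneg d_def abs_ge_zero real_less_rsqrt add.assoc)
  also have "\<dots> \<le> sqrt (H * (1 - H) / x) + sqrt (K / N / x) + sqrt ((d + \<beta>) / x)"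
  proof -
    have a: "0 \<le> H * (1 - H) / x" using H x0 by simp
    have b: "0 \<le> K / N / x" using K N x0 by simp
    have c: "0 \<le> (d + \<beta>) / x" using b0 x0 d_def by simp
    have "sqrt (H * (1 - H) / x + K / N / x + (d + \<beta>) / x) \<le> sqrt (H * (1 - H) / x + K / N / x) + sqrt ((d + \<beta>) / x)"
      using a b c by (intro sqrt_add_le_add_sqrt) auto
    moreover have "sqrt (H * (1 - H) / x + K / N / x) \<le> sqrt (H * (1 - H) / x) + sqrt (K / N / x)"
      using a b c by (intro sqrt_add_le_add_sqrt) auto
    ultimately show ?thesis by linarith
  qed
  finally have dlt: "d < sqrt (H * (1 - H) / x) + sqrt (K / N / x) + sqrt ((d + \<beta>) / x)" .
  have t2: "sqrt (K / N / x) \<le> K / (N * sqrt e)"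
  proof -
    have "K / N / x = K / (N * sqrt e)^2" using N e by (simp add: x_def power2_eq_square)
    then have "sqrt (K / N / x) = sqrt (K / (N * sqrt e)^2)" by simp
    also have "\<dots> = sqrt K / (N * sqrt e)" using N e by (simp add: real_sqrt_divide)
    finally have "sqrt (K / N / x) = sqrt K / (N * sqrt e)" .
    also have "\<dots> \<le> K / (N * sqrt e)" using K N e by (intro divide_right_mono) auto
    finally show ?thesis .
  qed
  have t3: "sqrt ((d + \<beta>) / x) \<le> 2 / (2 * N * e) powr (3/4)"
  proof -
    have s2: "sqrt 2 \<ge> 1.4" by (rule real_le_rsqrt) (simp add: power2_eq_square)
    have "d + \<beta> \<le> 1 / (sqrt 2 * sqrt x) + 1 / (4 * sqrt x)" using dle \<beta>_def by simp
    also have "\<dots> = (sqrt 2 / 2 + 1 / 4) / sqrt x"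
    proof -
      have s22: "sqrt 2 * sqrt 2 = 2" by simp
      show ?thesis using sx by (simp add: field_simps s22)
    qed
    also have "\<dots> \<le> sqrt 2 / sqrt x" using sx s2 by (intro divide_right_mono) auto
    finally have db: "d + \<beta> \<le> sqrt 2 / sqrt x" .
    have pw: "((2 * x) powr (3/4)) ^ 2 = 2 * x * sqrt (2 * x)"
    proof -
      have "((2 * x) powr (3/4)) ^ 2 = (2 * x) powr (3/4) * (2 * x) powr (3/4)"
        by (simp add: power2_eq_square)
      also have "\<dots> = (2 * x) powr (3/4 + 3/4)" by (simp only: powr_add)
      also have "(3/4 + 3/4 :: real) = 1 + 1/2" by simp
      also have "(2 * x) powr (1 + 1/2) = (2 * x) powr 1 * (2 * x) powr (1/2)"
        by (simp only: powr_add)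
      also have "\<dots> = 2 * x * sqrt (2 * x)" using x0 by (simp add: powr_half_sqrt)
      finally show ?thesis .
    qed
    have pos: "(2 * x) powr (3/4) > 0" using x0 by simp
    have "(d + \<beta>) / x \<le> (2 / (2 * x) powr (3/4))^2"
    proof -
      have "(2 / (2 * x) powr (3/4))^2 = 4 / (2 * x * sqrt (2 * x))"
        by (simp add: power_divide pw)
      also have "\<dots> = sqrt 2 / sqrt x / x" using x0
        by (simp add: real_sqrt_mult field_simps)
      moreover have "(d + \<beta>) / x \<le> sqrt 2 / sqrt x / x" using db x0 by (intro divide_right_mono) auto
      ultimately show ?thesis by simp
    qed
    then have "sqrt ((d + \<beta>) / x) \<le> sqrt ((2 / (2 * x) powr (3/4))^2)" by (rule real_sqrt_le_mono)
    also have "\<dots> = 2 / (2 * x) powr (3/4)" using pos by simp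
    finally show ?thesis by (simp add: x_def mult.assoc)
  qed
  have "\<bar>F - H\<bar> \<le> d + \<bar>G - H\<bar>" unfolding d_def by linarith
  also have "\<dots> \<le> d + K / N" using GH by simp
  finally have FH: "\<bar>F - H\<bar> \<le> d + K / N" .
  have eqK: "(1 / N + 1 / (N * sqrt e)) * \<bar>K\<bar> = K / N + K / (N * sqrt e)"
    using K by (simp add: algebra_simps)
  show ?thesis using dlt t2 t3 eqK FH unfolding x_def by linarith
qed

lemma prod_delta1:
  fixes g :: "'p \<Rightarrow> real"
  assumes "i \<in> I" "finite I"
  shows "(\<Prod>k\<in>I. (if k = i then g else (\<lambda>_. 1)) (w k)) = g (w i)"
proof -
  have "(\<Prod>k\<in>I. (if k = i then g else (\<lambda>_. 1)) (w k)) = (\<Prod>k\<in>I. if k = i then g (w k) else 1)"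
    by (intro prod.cong) auto
  also have "\<dots> = g (w i)" using assms by (simp add: prod.delta)
  finally show ?thesis .
qed

lemma prod_delta2:
  fixes g h :: "'p \<Rightarrow> real"
  assumes "i \<in> I" "j \<in> I" "i \<noteq> j" "finite I"
  shows "(\<Prod>k\<in>I. (if k = i then g else if k = j then h else (\<lambda>_. 1)) (w k)) = g (w i) * h (w j)"
proof -
  have "(\<Prod>k\<in>I. (if k = i then g else if k = j then h else (\<lambda>_. 1)) (w k))
      = (\<Prod>k\<in>I. (if k = i then g (w k) else 1) * (if k = j then h (w k) else 1))"
    using assms by (intro prod.cong) auto
  also have "\<dots> = g (w i) * h (w j)" using assms by (simp add: prod.distrib prod.delta)
  finally show ?thesis .
qed

lemma ecdf_bounds:
  assumes "N \<ge> 1"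
  shows "0 \<le> ecdf N f w t" "ecdf N f w t \<le> 1"
proof -
  have "(\<Sum>n=1..N. if f (w n) \<le> t then 1 else 0) \<le> (\<Sum>n=1..N. (1::real))"
    by (intro sum_mono) auto
  then have "(\<Sum>n=1..N. if f (w n) \<le> t then 1 else 0) \<le> real N" by simp
  moreover have "0 \<le> (\<Sum>n=1..N. if f (w n) \<le> t then 1 else (0::real))" by (intro sum_nonneg) auto
  ultimately show "0 \<le> ecdf N f w t" "ecdf N f w t \<le> 1" using assms
    by (auto simp: ecdf_def field_simps)
qed

lemma ecdf_diff:
  assumes "N \<ge> 1"
  shows "\<bar>ecdf N Q w t - ecdf N Qh w t\<bar> \<le>
    (\<Sum>n=1..N. if Qh (w n) - \<bar>Q (w n) - Qh (w n)\<bar> \<le> t \<and> t \<le> Qh (w n) + \<bar>Q (w n) - Qh (w n)\<bar>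
       then 1 else (0::real)) / real N"
proof -
  have e1: "ecdf N Q w t - ecdf N Qh w t = (\<Sum>n=1..N. (if Q (w n) \<le> t then 1 else 0) - (if Qh (w n) \<le> t then 1 else (0::real))) / real N"
    by (simp add: ecdf_def sum_subtractf diff_divide_distrib)
  have e2: "\<bar>\<Sum>n=1..N. (if Q (w n) \<le> t then 1 else 0) - (if Qh (w n) \<le> t then 1 else (0::real))\<bar>
     \<le> (\<Sum>n=1..N. \<bar>(if Q (w n) \<le> t then 1 else 0) - (if Qh (w n) \<le> t then 1 else (0::real))\<bar>)"
    by (rule sum_abs)
  have e3: "(\<Sum>n=1..N. \<bar>(if Q (w n) \<le> t then 1 else 0) - (if Qh (w n) \<le> t then 1 else (0::real))\<bar>)
     \<le> (\<Sum>n=1..N. if Qh (w n) - \<bar>Q (w n) - Qh (w n)\<bar> \<le> t \<and> t \<le> Qh (w n) + \<bar>Q (w n) - Qh (w n)\<bar>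
       then 1 else (0::real))"
    by (intro sum_mono) auto
  have "\<bar>ecdf N Q w t - ecdf N Qh w t\<bar> = \<bar>\<Sum>n=1..N. (if Q (w n) \<le> t then 1 else 0) - (if Qh (w n) \<le> t then 1 else (0::real))\<bar> / real N"
    unfolding e1 abs_divide by simp
  also have "\<dots> \<le> (\<Sum>n=1..N. if Qh (w n) - \<bar>Q (w n) - Qh (w n)\<bar> \<le> t \<and> t \<le> Qh (w n) + \<bar>Q (w n) - Qh (w n)\<bar>
       then 1 else (0::real)) / real N"
    by (rule divide_right_mono[OF order_trans[OF e2 e3]]) simp
  finally show ?thesis .
qed

lemma count_sqrt:
  fixes c :: "nat \<Rightarrow> bool"
  shows "sqrt (\<Sum>n=1..N. if c n then 1 else (0::real)) \<le> (\<Sum>n=1..N. if c n then 1 else (0::real))"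
proof (cases "\<exists>n\<in>{1..N}. c n")
  case True
  then obtain n where n: "n \<in> {1..N}" "c n" by auto
  have "(if c n then 1 else (0::real)) \<le> (\<Sum>n=1..N. if c n then 1 else (0::real))"
    using n by (intro member_le_sum) auto
  then have "1 \<le> (\<Sum>n=1..N. if c n then 1 else (0::real))" using n by simp
  then have s1: "1 \<le> sqrt (\<Sum>n=1..N. if c n then 1 else (0::real))" by simp
  then have "sqrt (\<Sum>n=1..N. if c n then 1 else (0::real)) * 1 \<le> sqrt (\<Sum>n=1..N. if c n then 1 else (0::real)) * sqrt (\<Sum>n=1..N. if c n then 1 else (0::real))"
    by (intro mult_left_mono) auto
  then show ?thesis using s1 by simp
next
  case False
  then have "(\<Sum>n=1..N. if c n then 1 else (0::real)) = 0" by (intro sum.neutral) auto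
  then show ?thesis by simp
qed


theorem theorem4:
  fixes D :: "'p measure" and Q Qh :: "'p \<Rightarrow> real"
    and \<epsilon> :: real and N :: nat and t :: real
  assumes "prob_space D"
    and "Q \<in> borel_measurable D" and "Qh \<in> borel_measurable D"
    and "0 < \<epsilon>" and "\<epsilon> < 1" and "N \<ge> 1"
  shows "measure (sample_space D N)
           {w \<in> space (sample_space D N).
              \<bar>cdf_QoI D Q t - ecdf N Qh w t\<bar>
                \<le> sqrt (ecdf N Qh w t * (1 - ecdf N Qh w t) / (real N * \<epsilon>))
                  + (1 / real N + 1 / (real N * sqrt \<epsilon>))
                    * \<bar>\<Sum>n=1..N. if Qh (w n) - \<bar>Q (w n) - Qh (w n)\<bar> \<le> t
                                     \<and> t \<le> Qh (w n) + \<bar>Q (w n) - Qh (w n)\<bar>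
                                   then 1 else (0::real)\<bar>
                  + 2 / (2 * real N * \<epsilon>) powr (3/4)}
         \<ge> 1 - 2 * \<epsilon> + \<epsilon>\<^sup>2"
proof -
  note Qm[measurable] = assms(2) and Qhm[measurable] = assms(3)
  interpret DD: prob_space D by fact
  define M where "M = sample_space D N"
  have MP: "M = PiM {1..N} (\<lambda>_. D)" by (simp add: M_def sample_space_def)
  interpret PP: product_prob_space "\<lambda>_. D" "{1..N}"
    by (simp add: product_prob_space_def product_sigma_finite_def product_prob_space_axioms_def
        DD.sigma_finite_measure_axioms DD.prob_space_axioms)
  interpret P: prob_space M unfolding MP by (rule prob_space_PiM) (rule assms(1))
  have comp: "(\<lambda>w. g (w n)) \<in> borel_measurable M" if "g \<in> borel_measurable D" "n \<in> {1..N}"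
    for g :: "'p \<Rightarrow> real" and n
  proof -
    have "(\<lambda>w. w n) \<in> measurable (PiM {1..N} (\<lambda>_. D)) D"
      using measurable_component_singleton[of n "{1..N}" "\<lambda>_. D"] that(2) by simp
    then show ?thesis unfolding MP using that(1) by (rule measurable_compose)
  qed
  have sum_meas: "(\<lambda>w. \<Sum>n=1..N. g (w n)) \<in> borel_measurable M" if "g \<in> borel_measurable D"
    for g :: "'p \<Rightarrow> real"
    by (intro borel_measurable_sum comp that)
  define x where "x = real N * \<epsilon>"
  have N1: "real N \<ge> 1" using assms(6) by simp
  have x0: "x > 0" using assms N1 by (simp add: x_def)
  define S where "S = {w \<in> space (sample_space D N).
              \<bar>cdf_QoI D Q t - ecdf N Qh w t\<bar>
                \<le> sqrt (ecdf N Qh w t * (1 - ecdf N Qh w t) / (real N * \<epsilon>))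
                  + (1 / real N + 1 / (real N * sqrt \<epsilon>))
                    * \<bar>\<Sum>n=1..N. if Qh (w n) - \<bar>Q (w n) - Qh (w n)\<bar> \<le> t
                                     \<and> t \<le> Qh (w n) + \<bar>Q (w n) - Qh (w n)\<bar>
                                   then 1 else (0::real)\<bar>
                  + 2 / (2 * real N * \<epsilon>) powr (3/4)}"
  define F where "F = cdf_QoI D Q t"
  have F01: "0 \<le> F" "F \<le> 1" by (auto simp: F_def cdf_QoI_def)
  have Smeas: "S \<in> sets M"
  proof -
    have m1: "(\<lambda>w. ecdf N Qh w t) \<in> borel_measurable M"
      unfolding ecdf_def by (intro borel_measurable_times borel_measurable_const sum_meas) measurable
    have m2: "(\<lambda>w. \<Sum>n=1..N. if Qh (w n) - \<bar>Q (w n) - Qh (w n)\<bar> \<le> t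
                                     \<and> t \<le> Qh (w n) + \<bar>Q (w n) - Qh (w n)\<bar>
                                   then 1 else (0::real)) \<in> borel_measurable M"
      by (rule sum_meas[of "\<lambda>y. if Qh y - \<bar>Q y - Qh y\<bar> \<le> t \<and> t \<le> Qh y + \<bar>Q y - Qh y\<bar> then 1 else 0"])
         measurable
    show ?thesis unfolding S_def M_def[symmetric] using m1 m2 by measurable
  qed
  have main: "measure M S \<ge> 1 - \<epsilon>"
  proof (cases "x \<le> 1")
    case True
    have "S = space M"
    proof -
      have "\<bar>F - ecdf N Qh w t\<bar> \<le> sqrt (ecdf N Qh w t * (1 - ecdf N Qh w t) / (real N * \<epsilon>))
                  + (1 / real N + 1 / (real N * sqrt \<epsilon>)) * \<bar>K\<bar> + 2 / (2 * real N * \<epsilon>) powr (3/4)"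
        for w K
      proof -
        have H: "0 \<le> ecdf N Qh w t" "ecdf N Qh w t \<le> 1" using ecdf_bounds assms(6) by auto
        have "(2 * real N * \<epsilon>) powr (3/4) \<le> 2 powr (3/4)"
          using True x0 by (intro powr_mono2) (auto simp: x_def mult.commute)
        also have "\<dots> \<le> 2 powr 1" by (intro powr_mono) auto
        finally have "(2 * real N * \<epsilon>) powr (3/4) \<le> 2" by simp
        moreover have "(2 * real N * \<epsilon>) powr (3/4) > 0" using assms(4,6) by simp
        ultimately have "1 \<le> 2 / (2 * real N * \<epsilon>) powr (3/4)" by (simp add: field_simps)
        moreover have "\<bar>F - ecdf N Qh w t\<bar> \<le> 1" using H F01 by linarith
        moreover have "0 \<le> sqrt (ecdf N Qh w t * (1 - ecdf N Qh w t) / (real N * \<epsilon>))"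
          using H assms(4,6) by simp
        moreover have "0 \<le> (1 / real N + 1 / (real N * sqrt \<epsilon>)) * \<bar>K\<bar>"
          using N1 assms(4) by simp
        ultimately show ?thesis by linarith
      qed
      then show ?thesis unfolding S_def M_def F_def by auto
    qed
    then show ?thesis using assms(4) P.prob_space by simp
  next
    case False
    then have x1: "x > 1" by simp
    define y where "y z = (if Q z \<le> t then 1 else 0 :: real) - F" for z
    have ym[measurable]: "y \<in> borel_measurable D" unfolding y_def by measurable
    have ybd: "\<bar>y z\<bar> \<le> 1" for z using F01 by (auto simp: y_def)
    have yint: "integrable D y" by (rule DD.integrable_const_bound[where B=1]) (use ybd in auto)
    have yyint: "integrable D (\<lambda>z. y z * y z)"
    proof -
      have yy1: "y z * y z \<le> 1" for z
        using ybd[of z] by (metis abs_ge_zero abs_mult abs_le_D1 mult_le_one)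
      show ?thesis by (rule DD.integrable_const_bound[where B=1]) (use yy1 in auto)
    qed
    have intI: "(\<integral>z. (if Q z \<le> t then 1 else 0 :: real) \<partial>D) = F"
    proof -
      have "(\<integral>z. (if Q z \<le> t then 1 else 0 :: real) \<partial>D) = (\<integral>z. indicator {z\<in>space D. Q z \<le> t} z \<partial>D)"
        by (intro Bochner_Integration.integral_cong) (auto simp: indicator_def)
      also have "\<dots> = measure D {z\<in>space D. Q z \<le> t}" using Bochner_Integration.integral_indicator[where M=D and A="{z\<in>space D. Q z \<le> t}"] by (simp add: Int_absorb2 subset_iff)
      finally show ?thesis by (simp add: F_def cdf_QoI_def)
    qed
    have Iint: "integrable D (\<lambda>z. (if Q z \<le> t then 1 else 0 :: real))"
      by (rule DD.integrable_const_bound[where B=1]) auto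
    have y0: "(\<integral>z. y z \<partial>D) = 0"
      unfolding y_def using intI Iint by (simp add: Bochner_Integration.integral_diff DD.prob_space)
    have yy: "(\<integral>z. y z * y z \<partial>D) = F * (1 - F)"
    proof -
      have "(\<lambda>z. y z * y z) = (\<lambda>z. (1 - 2 * F) * (if Q z \<le> t then 1 else 0 :: real) + F * F)"
        by (auto simp: y_def algebra_simps fun_eq_iff)
      then have "(\<integral>z. y z * y z \<partial>D) = (1 - 2 * F) * F + F * F"
        using intI Iint by (simp add: Bochner_Integration.integral_add DD.prob_space)
      then show ?thesis by (simp add: algebra_simps)
    qed
    have cross: "(\<integral>w. y (w i) * y (w j) \<partial>M) = (if i = j then F * (1 - F) else 0)"
      if ij: "i \<in> {1..N}" "j \<in> {1..N}" for i j
    proof (cases "i = j")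
      case True
      have "(\<integral>w. y (w i) * y (w j) \<partial>M)
          = (\<integral>w. (\<Prod>k\<in>{1..N}. (if k = i then (\<lambda>z. y z * y z) else (\<lambda>_. 1)) (w k)) \<partial>M)"
        using ij True by (simp add: prod_delta1)
      also have "\<dots> = (\<Prod>k\<in>{1..N}. integral\<^sup>L D (if k = i then (\<lambda>z. y z * y z) else (\<lambda>_. 1)))"
        unfolding MP by (rule PP.product_integral_prod) (auto simp: yyint)
      also have "\<dots> = (\<Prod>k\<in>{1..N}. if k = i then integral\<^sup>L D (\<lambda>z. y z * y z) else 1)"
        by (intro prod.cong) (auto simp: DD.prob_space)
      also have "\<dots> = F * (1 - F)" using ij by (simp add: prod.delta yy)
      finally show ?thesis using True by simp
    next
      case False
      have "(\<integral>w. y (w i) * y (w j) \<partial>M)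
          = (\<integral>w. (\<Prod>k\<in>{1..N}. (if k = i then y else if k = j then y else (\<lambda>_. 1)) (w k)) \<partial>M)"
        using ij False by (simp add: prod_delta2)
      also have "\<dots> = (\<Prod>k\<in>{1..N}. integral\<^sup>L D (if k = i then y else if k = j then y else (\<lambda>_. 1)))"
        unfolding MP by (rule PP.product_integral_prod) (auto simp: yint)
      also have "\<dots> = 0"
        using ij by (intro prod_zero) (auto intro!: bexI[of _ i] simp: y0)
      finally show ?thesis using False by simp
    qed
    define V where "V = F * (1 - F)"
    define G where "G w = ecdf N Q w t" for w
    have yyM: "integrable M (\<lambda>w. y (w i) * y (w j))" if "i \<in> {1..N}" "j \<in> {1..N}" for i j
    proof -
      have m: "(\<lambda>w. y (w i) * y (w j)) \<in> borel_measurable M"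
        using comp[OF ym that(1)] comp[OF ym that(2)] by measurable
      have b: "\<bar>y (w i) * y (w j)\<bar> \<le> 1" for w
        using ybd[of "w i"] ybd[of "w j"] by (metis abs_ge_zero abs_mult mult_le_one)
      show ?thesis by (rule P.integrable_const_bound[where B=1]) (use b m in auto)
    qed
    have Gd: "(G w - F)^2 = (\<Sum>i=1..N. \<Sum>j=1..N. y (w i) * y (w j)) / (real N)^2" for w
    proof -
      have "G w - F = (\<Sum>n=1..N. y (w n)) / real N"
        using N1 by (simp add: G_def ecdf_def y_def sum_subtractf field_simps)
      then show ?thesis by (simp add: power_divide power2_eq_square sum_product)
    qed
    have EG: "(\<integral>w. (G w - F)^2 \<partial>M) = V / real N"
    proof -
      have "(\<integral>w. (G w - F)^2 \<partial>M) = (\<integral>w. (\<Sum>i=1..N. \<Sum>j=1..N. y (w i) * y (w j)) \<partial>M) / (real N)^2"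
        unfolding Gd by simp
      also have "(\<integral>w. (\<Sum>i=1..N. \<Sum>j=1..N. y (w i) * y (w j)) \<partial>M)
          = (\<Sum>i=1..N. \<Sum>j=1..N. (\<integral>w. y (w i) * y (w j) \<partial>M))"
      proof -
        have "(\<integral>w. (\<Sum>i=1..N. \<Sum>j=1..N. y (w i) * y (w j)) \<partial>M)
            = (\<Sum>i=1..N. (\<integral>w. (\<Sum>j=1..N. y (w i) * y (w j)) \<partial>M))"
          by (rule Bochner_Integration.integral_sum) (intro Bochner_Integration.integrable_sum yyM; simp)
        also have "\<dots> = (\<Sum>i=1..N. \<Sum>j=1..N. (\<integral>w. y (w i) * y (w j) \<partial>M))"
          by (intro sum.cong refl Bochner_Integration.integral_sum yyM) auto
        finally show ?thesis .
      qed
      also have "\<dots> = (\<Sum>i=1..N. \<Sum>j=1..N. (if i = j then V else 0))"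
        by (intro sum.cong refl) (simp add: cross V_def)
      also have "\<dots> = real N * V" by simp
      finally show ?thesis using N1 by (simp add: power2_eq_square)
    qed
    define \<beta> where "\<beta> = 1 / (4 * sqrt x)"
    have b0: "\<beta> > 0" using x0 by (simp add: \<beta>_def)
    have V0: "0 \<le> V" using F01 by (simp add: V_def)
    define c where "c = (V + \<beta>) / x"
    have c0: "c > 0" using b0 V0 x0 by (simp add: c_def)
    define B where "B = {w \<in> space M. c \<le> (G w - F)^2}"
    have Gm: "(\<lambda>w. G w) \<in> borel_measurable M"
      unfolding G_def ecdf_def by (intro borel_measurable_times borel_measurable_const sum_meas) measurable
    have Bm: "B \<in> sets M" unfolding B_def using Gm by measurable
    have GFint: "integrable M (\<lambda>w. (G w - F)^2)"
    proof -
      have b: "(G w - F)^2 \<le> 1" for w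
        using ecdf_bounds[OF assms(6), of Q w t] F01 unfolding G_def
        by (simp add: abs_square_le_1)
      show ?thesis by (rule P.integrable_const_bound[where B=1]) (use b Gm in auto)
    qed
    have "measure M B \<le> (\<integral>w. (G w - F)^2 \<partial>M) / c"
      unfolding B_def by (rule integral_Markov_inequality_measure[where A="space M"]) (use GFint c0 in auto)
    also have "\<dots> = \<epsilon> * (V / (V + \<beta>))"
      unfolding EG c_def x_def using N1 b0 V0 assms(4) by (simp add: field_simps)
    also have "\<dots> \<le> \<epsilon> * 1" using b0 V0 assms(4) by (intro mult_left_mono) auto
    finally have PB: "measure M B \<le> \<epsilon>" by simp
    have sub: "space M - B \<subseteq> S"
    proof
      fix w assume w: "w \<in> space M - B"
      define K where "K = (\<Sum>n=1..N. if Qh (w n) - \<bar>Q (w n) - Qh (w n)\<bar> \<le> t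
                                     \<and> t \<le> Qh (w n) + \<bar>Q (w n) - Qh (w n)\<bar>
                                   then 1 else (0::real))"
      have K0: "0 \<le> K" unfolding K_def by (intro sum_nonneg) auto
      have "\<bar>F - ecdf N Qh w t\<bar> \<le> sqrt (ecdf N Qh w t * (1 - ecdf N Qh w t) / (real N * \<epsilon>))
                  + (1 / real N + 1 / (real N * sqrt \<epsilon>)) * \<bar>K\<bar> + 2 / (2 * real N * \<epsilon>) powr (3/4)"
      proof (rule det_main)
        show "0 \<le> F" "F \<le> 1" by (fact F01)+
        show "0 \<le> G w" "G w \<le> 1" unfolding G_def using ecdf_bounds[OF assms(6)] by auto
        show "0 \<le> ecdf N Qh w t" "ecdf N Qh w t \<le> 1" using ecdf_bounds[OF assms(6)] by auto
        show "\<bar>G w - ecdf N Qh w t\<bar> \<le> K / real N" unfolding G_def K_def by (rule ecdf_diff[OF assms(6)])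
        show "sqrt K \<le> K" unfolding K_def by (rule count_sqrt)
        show "0 \<le> K" by (fact K0)
        show "1 \<le> real N" by (fact N1)
        show "0 < \<epsilon>" by (fact assms(4))
        show "1 < real N * \<epsilon>" using x1 by (simp add: x_def)
        show "(G w - F)\<^sup>2 < (F * (1 - F) + 1 / (4 * sqrt (real N * \<epsilon>))) / (real N * \<epsilon>)"
          using w unfolding B_def c_def V_def \<beta>_def x_def by auto
      qed
      then show "w \<in> S" using w unfolding S_def K_def F_def M_def by auto
    qed
    have "1 - \<epsilon> \<le> 1 - measure M B" using PB by simp
    also have "\<dots> = measure M (space M - B)" using Bm by (simp add: P.prob_compl)
    also have "\<dots> \<le> measure M S" using sub Smeas by (intro P.finite_measure_mono) auto
    finally show ?thesis .
  qed
  have "1 - 2 * \<epsilon> + \<epsilon>\<^sup>2 \<le> 1 - \<epsilon>" using assms(4,5) by (simp add: power2_eq_square mult_left_le)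
  then show ?thesis using main unfolding S_def M_def by linarith
qed

end
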